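(* Assume $b_1<n^*$ and $b_2<m^*$. (i) For every minimal set cover $S'\subseteq\mathcal V$, $$\max_{\sigma^1\in\Delta(\mathcal A_1):\ \text{node basis of }\sigma^1\subseteq S'}\ \min_{T\in\mathcal A_2}\bigl(-U_2(\sigma^1,T)\bigr)=b_2\Bigl(\frac{b_1}{|S'|}-1\Bigr),$$ and the maximum is attained by $\sigma^1(S',b_1)$. (ii) For every set packing $T'\subseteq\mathcal E$ with $|T'|\ge b_2$, $$\max_{\sigma^2\in\Delta(\mathcal A_2):\ \text{component basis of }\sigma^2\subseteq T'}\ \min_{S\in\mathcal A_1}U_2(S,\sigma^2)=\max\Bigl\{0,\ b_2\Bigl(1-\frac{b_1}{|T'|}\Bigr)\Bigr\},$$ and the maximum is attained by $\sigma^2(T',b_2)$.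
   Context: Detection model: finite nonempty sets $\mathcal V$ (nodes), $\mathcal E$ (components), monitoring sets $\mathcal C_i\subseteq\mathcal E$ for $i\in\mathcal V$ with every $e\in\mathcal E$ in some $\mathcal C_i$; $\mathcal C_S=\bigcup_{i\in S}\mathcal C_i$; $F(S,T)=|\mathcal C_S\cap T|$. A set cover is $S\subseteq\mathcal V$ with $\mathcal C_S=\mathcal E$; it is minimal if no proper subset is a set cover; $n^*$ is the minimum size of a set cover. A set packing is $T\subseteq\mathcal E$ with $|\mathcal C_i\cap T|\le1$ for all $i$; $m^*$ is the maximum size of a set packing. Game $\Gamma(b_1,b_2)$ for positive integers $b_1,b_2$: $\mathcal A_1=\{S\subseteq\mathcal V:|S|\le b_1\}$, $\mathcal A_2=\{T\subseteq\mathcal E:|T|\le b_2\}$, mixed strategies $\sigma^1\in\Delta(\mathcal A_1)$, $\sigma^2\in\Delta(\mathcal A_2)$ drawn independently; $U_1(\sigma^1,\sigma^2)=\mathbb E[F(S,T)]$, $U_2(\sigma^1,\sigma^2)=\mathbb E[|T|]-\mathbb E[F(S,T)]$ with $S\sim\sigma^1$, $T\sim\sigma^2$; pure actions are identified with point masses. Node basis of $\sigma^1$: $\{i:\mathbb P_{\sigma^1}(i\in S)>0\}$; component basis of $\sigma^2$: $\{e:\mathbb P_{\sigma^2}(e\in T)>0\}$. Cyclic strategies: for $S=\{i_1,\dots,i_n\}$ (fixed enumeration) with $n\ge b_1$, $S^k=\{i_k,\dots,i_{k+b_1-1}\}$ with indices cyclic mod $n$, $k=1,\dots,n$, and $\sigma^1(S,b_1)$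 puts probability $1/n$ on each $S^k$; analogously for $T=\{e_1,\dots,e_m\}$ with $m\ge b_2$, $T^l=\{e_l,\dots,e_{l+b_2-1}\}$ cyclically and $\sigma^2(T,b_2)$ puts probability $1/m$ on each $T^l$. *)

theory Defs
  imports "HOL-Probability.Probability"
begin

text \<open>Detection model: nodes V, components E, monitoring sets C i.\<close>

definition model :: "'v set \<Rightarrow> 'e set \<Rightarrow> ('v \<Rightarrow> 'e set) \<Rightarrow> bool" where
  "model V E C \<longleftrightarrow> finite V \<and> finite E \<and> V \<noteq> {} \<and> E \<noteq> {}
     \<and> (\<forall>i\<in>V. C i \<subseteq> E) \<and> (\<forall>e\<in>E. \<exists>i\<in>V. e \<in> C i)"

definition CS :: "('v \<Rightarrow> 'e set) \<Rightarrow> 'v set \<Rightarrow> 'e set" where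
  "CS C S = (\<Union>i\<in>S. C i)"

definition FF :: "('v \<Rightarrow> 'e set) \<Rightarrow> 'v set \<Rightarrow> 'e set \<Rightarrow> nat" where
  "FF C S T = card (CS C S \<inter> T)"

definition set_cover :: "'v set \<Rightarrow> 'e set \<Rightarrow> ('v \<Rightarrow> 'e set) \<Rightarrow> 'v set \<Rightarrow> bool" where
  "set_cover V E C S \<longleftrightarrow> S \<subseteq> V \<and> CS C S = E"

definition minimal_set_cover :: "'v set \<Rightarrow> 'e set \<Rightarrow> ('v \<Rightarrow> 'e set) \<Rightarrow> 'v set \<Rightarrow> bool" where
  "minimal_set_cover V E C S \<longleftrightarrow> set_cover V E C S \<and> (\<forall>S'. S' \<subset> S \<longrightarrow> \<not> set_cover V E C S')"

definition n_star :: "'v set \<Rightarrow> 'e set \<Rightarrow> ('v \<Rightarrow> 'e set) \<Rightarrow> nat" where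
  "n_star V E C = Min (card ` {S. set_cover V E C S})"

definition set_packing :: "'v set \<Rightarrow> 'e set \<Rightarrow> ('v \<Rightarrow> 'e set) \<Rightarrow> 'e set \<Rightarrow> bool" where
  "set_packing V E C T \<longleftrightarrow> T \<subseteq> E \<and> (\<forall>i\<in>V. card (C i \<inter> T) \<le> 1)"

definition m_star :: "'v set \<Rightarrow> 'e set \<Rightarrow> ('v \<Rightarrow> 'e set) \<Rightarrow> nat" where
  "m_star V E C = Max (card ` {T. set_packing V E C T})"

definition A1 :: "'v set \<Rightarrow> nat \<Rightarrow> 'v set set" where
  "A1 V b1 = {S. S \<subseteq> V \<and> card S \<le> b1}"

definition A2 :: "'e set \<Rightarrow> nat \<Rightarrow> 'e set set" where
  "A2 E b2 = {T. T \<subseteq> E \<and> card T \<le> b2}"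

definition mixed :: "'a set set \<Rightarrow> 'a set pmf \<Rightarrow> bool" where
  "mixed A \<sigma> \<longleftrightarrow> set_pmf \<sigma> \<subseteq> A"

definition U1 :: "('v \<Rightarrow> 'e set) \<Rightarrow> 'v set pmf \<Rightarrow> 'e set pmf \<Rightarrow> real" where
  "U1 C \<sigma>1 \<sigma>2 = measure_pmf.expectation (pair_pmf \<sigma>1 \<sigma>2) (\<lambda>(S,T). real (FF C S T))"

definition U2 :: "('v \<Rightarrow> 'e set) \<Rightarrow> 'v set pmf \<Rightarrow> 'e set pmf \<Rightarrow> real" where
  "U2 C \<sigma>1 \<sigma>2 = measure_pmf.expectation \<sigma>2 (\<lambda>T. real (card T))
                 - measure_pmf.expectation (pair_pmf \<sigma>1 \<sigma>2) (\<lambda>(S,T). real (FF C S T))"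

definition basis :: "'a set pmf \<Rightarrow> 'a set" where
  "basis \<sigma> = {x. measure_pmf.prob \<sigma> {S. x \<in> S} > 0}"

definition cyclic :: "'a list \<Rightarrow> nat \<Rightarrow> 'a set pmf" where
  "cyclic xs b = map_pmf (\<lambda>k. {xs ! ((k + j) mod length xs) | j. j < b})
                         (pmf_of_set {0..<length xs})"

end

theory Submission imports Defs begin

lemma exp_fin:
  fixes f :: "'a \<Rightarrow> real"
  assumes "finite (set_pmf p)"
  shows "measure_pmf.expectation p f = (\<Sum>a\<in>set_pmf p. pmf p a * f a)"
  using integral_measure_pmf[OF assms, of p f] by auto

lemma exp_card_inter:
  assumes "finite (set_pmf p)" "finite A"
  shows "measure_pmf.expectation p (\<lambda>S. real (card (A \<inter> g S)))
       = (\<Sum>e\<in>A. measure_pmf.expectation p (\<lambda>S. if e \<in> g S then 1 else 0))"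
proof -
  have c: "real (card (A \<inter> g S)) = (\<Sum>e\<in>A. (if e \<in> g S then 1 else 0))" for S
    using assms(2) by (simp add: sum.If_cases Int_def)
  show ?thesis
    unfolding exp_fin[OF assms(1)] c
    by (simp add: sum_distrib_left sum.swap[of _ A])
qed

lemma exp_mono:
  fixes f g :: "'a \<Rightarrow> real"
  assumes "finite (set_pmf p)" "\<And>a. a \<in> set_pmf p \<Longrightarrow> f a \<le> g a"
  shows "measure_pmf.expectation p f \<le> measure_pmf.expectation p g"
  unfolding exp_fin[OF assms(1)]
  by (intro sum_mono mult_left_mono) (auto simp: assms(2))

lemma exp_cong:
  fixes f g :: "'a \<Rightarrow> real"
  assumes "finite (set_pmf p)" "\<And>a. a \<in> set_pmf p \<Longrightarrow> f a = g a"
  shows "measure_pmf.expectation p f = measure_pmf.expectation p g"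
  unfolding exp_fin[OF assms(1)] using assms(2) by simp

lemma exp_le_const:
  fixes f :: "'a \<Rightarrow> real"
  assumes "finite (set_pmf p)" "\<And>a. a \<in> set_pmf p \<Longrightarrow> f a \<le> c"
  shows "measure_pmf.expectation p f \<le> c"
proof -
  have "measure_pmf.expectation p f \<le> (\<Sum>a\<in>set_pmf p. pmf p a * c)"
    unfolding exp_fin[OF assms(1)] by (intro sum_mono mult_left_mono) (auto simp: assms(2))
  also have "\<dots> = c" using sum_pmf_eq_1[OF assms(1) order_refl] by (simp add: sum_distrib_right[symmetric])
  finally show ?thesis .
qed

lemma basis_supp:
  assumes "S \<in> set_pmf p" "x \<in> S"
  shows "x \<in> basis p"
proof -
  have "pmf p S \<le> measure_pmf.prob p {S. x \<in> S}"
    unfolding measure_pmf_single[symmetric] using assms(2)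
    by (intro measure_pmf.finite_measure_mono) auto
  moreover have "pmf p S > 0" using assms(1) by (simp add: pmf_positive)
  ultimately show ?thesis unfolding basis_def by auto
qed

lemma negU2_ret:
  "- U2 C s (return_pmf T) = measure_pmf.expectation s (\<lambda>S. real (FF C S T)) - real (card T)"
  unfolding U2_def pair_return_pmf2 by simp

lemma U2_ret:
  "U2 C (return_pmf S) s = measure_pmf.expectation s (\<lambda>T. real (card T)) - measure_pmf.expectation s (\<lambda>T. real (FF C S T))"
  unfolding U2_def pair_return_pmf1 by simp

definition W :: "'a list \<Rightarrow> nat \<Rightarrow> nat \<Rightarrow> 'a set" where
  "W xs b k = (\<lambda>j. xs ! ((k + j) mod length xs)) ` {..<b}"

lemma cyclic_W: "cyclic xs b = map_pmf (W xs b) (pmf_of_set {0..<length xs})"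
  unfolding cyclic_def W_def by (rule arg_cong2[where f=map_pmf]) auto

lemma exp_cyclic:
  fixes f :: "'a set \<Rightarrow> real"
  assumes "length xs > 0"
  shows "measure_pmf.expectation (cyclic xs b) f = (\<Sum>k<length xs. f (W xs b k)) / length xs"
  unfolding cyclic_W using assms by (simp add: atLeast0LessThan, subst integral_pmf_of_set, auto)


lemma mod_shift_inj:
  fixes x y j n :: nat
  assumes "x < n" "y < n" "(x + j) mod n = (y + j) mod n"
  shows "x = y"
proof (cases "x \<le> y")
  case True
  then obtain s where "y + j = x + j + n * s" using mod_eq_nat2E[OF assms(3)] by auto
  then have "y = x + n * s" by simp
  then show ?thesis using assms(2) by (cases s) auto
next
  case False
  then obtain s where "x + j = y + j + n * s" using mod_eq_nat1E[OF assms(3)] by auto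
  then have "x = y + n * s" by simp
  then show ?thesis using assms(1) by (cases s) auto
qed

lemma shift_sum:
  fixes f :: "nat \<Rightarrow> 'b::comm_monoid_add"
  assumes "n > 0"
  shows "(\<Sum>k<n. f ((k + j) mod n)) = (\<Sum>k<n. f k)"
proof -
  have inj: "inj_on (\<lambda>k. (k + j) mod n) {..<n}"
  proof (rule inj_onI)
    fix x y assume "x \<in> {..<n}" "y \<in> {..<n}" "(x + j) mod n = (y + j) mod n"
    then show "x = y" using \<open>x \<in> _\<close> \<open>y \<in> _\<close> mod_shift_inj by auto
  qed
  have img: "(\<lambda>k. (k + j) mod n) ` {..<n} = {..<n}"
    using inj by (intro endo_inj_surj) (auto simp: assms)
  show ?thesis using sum.reindex[OF inj, of f] img by simp
qed

lemma W_inj: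
  assumes "distinct xs" "b \<le> length xs"
  shows "inj_on (\<lambda>j. xs ! ((k + j) mod length xs)) {..<b}"
proof (rule inj_onI)
  fix x y assume x: "x \<in> {..<b}" and y: "y \<in> {..<b}"
    and e: "xs ! ((k + x) mod length xs) = xs ! ((k + y) mod length xs)"
  have n: "length xs > 0" using x assms(2) by auto
  have "(k + x) mod length xs = (k + y) mod length xs"
    using e assms(1) n by (simp add: nth_eq_iff_index_eq)
  then show "x = y" using x y assms(2) mod_shift_inj[of x "length xs" y k] by (simp add: add.commute)
qed

lemma card_W:
  assumes "distinct xs" "b \<le> length xs"
  shows "card (W xs b k) = b"
  unfolding W_def using card_image[OF W_inj[OF assms]] by simp

lemma W_sub:
  assumes "length xs > 0"
  shows "W xs b k \<subseteq> set xs"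
  unfolding W_def using assms by auto

lemma sum_W:
  assumes "distinct xs" "b \<le> length xs"
  shows "(\<Sum>y\<in>W xs b k. g y) = (\<Sum>j<b. g (xs ! ((k + j) mod length xs)))"
  unfolding W_def using sum.reindex[OF W_inj[OF assms], of g] by simp

lemma sum_set_nth:
  assumes "distinct xs"
  shows "(\<Sum>y\<in>set xs. g y) = (\<Sum>k<length xs. g (xs ! k))"
proof -
  have "inj_on (nth xs) {..<length xs}" using assms by (simp add: inj_on_nth)
  moreover have "nth xs ` {..<length xs} = set xs" by (auto simp: set_conv_nth)
  ultimately show ?thesis using sum.reindex[of "nth xs" "{..<length xs}" g] by simp
qed

lemma core:
  fixes g :: "'a \<Rightarrow> real"
  assumes "distinct xs" "b \<le> length xs" "length xs > 0"
  shows "(\<Sum>k<length xs. \<Sum>y\<in>W xs b k. g y) = b * (\<Sum>y\<in>set xs. g y)"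
proof -
  have "(\<Sum>k<length xs. \<Sum>y\<in>W xs b k. g y)
      = (\<Sum>k<length xs. \<Sum>j<b. g (xs ! ((k + j) mod length xs)))"
    using sum_W[OF assms(1,2), of g] by simp
  also have "\<dots> = (\<Sum>j<b. \<Sum>k<length xs. g (xs ! ((k + j) mod length xs)))"
    by (rule sum.swap)
  also have "\<dots> = (\<Sum>j<b. \<Sum>k<length xs. g (xs ! k))"
    using shift_sum[OF assms(3), of "\<lambda>i. g (xs ! i)"] by simp
  also have "\<dots> = b * (\<Sum>y\<in>set xs. g y)" using sum_set_nth[OF assms(1), of g] by simp
  finally show ?thesis .
qed

lemma count_W:
  assumes "distinct xs" "b \<le> length xs" "length xs > 0" "x \<in> set xs"
  shows "(\<Sum>k<length xs. (if x \<in> W xs b k then 1 else 0 :: real)) = b"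
proof -
  have fin: "finite (W xs b k)" for k unfolding W_def by simp
  have "(\<Sum>k<length xs. (if x \<in> W xs b k then 1 else 0 :: real))
     = (\<Sum>k<length xs. \<Sum>y\<in>W xs b k. (if y = x then 1 else 0 :: real))"
    using fin by (simp add: sum.delta')
  also have "\<dots> = b" using core[OF assms(1-3), of "\<lambda>y. if y = x then 1 else 0"] assms(4)
    by (simp add: sum.delta')
  finally show ?thesis .
qed

lemma avg:
  fixes q :: "'a \<Rightarrow> real"
  assumes "finite I" "card I > 0" "b \<le> card I"
  shows "\<exists>J\<subseteq>I. card J = b \<and> (\<Sum>y\<in>J. q y) \<le> real b / real (card I) * (\<Sum>y\<in>I. q y)"
proof -
  obtain xs where xs: "set xs = I" "distinct xs" using finite_distinct_list[OF assms(1)] by blast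
  have len: "length xs = card I" using xs distinct_card by metis
  define n where "n = length xs"
  have n: "n > 0" "b \<le> n" using len assms n_def by auto
  have tot: "(\<Sum>k<n. \<Sum>y\<in>W xs b k. q y) = b * (\<Sum>y\<in>I. q y)"
    using core[OF xs(2), of b q] n xs(1) n_def by simp
  have "\<exists>k<n. (\<Sum>y\<in>W xs b k. q y) \<le> (b * (\<Sum>y\<in>I. q y)) / n"
  proof (rule ccontr)
    assume "\<not> ?thesis"
    then have "\<forall>k\<in>{..<n}. (b * (\<Sum>y\<in>I. q y)) / n < (\<Sum>y\<in>W xs b k. q y)" by auto
    then have "(\<Sum>k<n. (b * (\<Sum>y\<in>I. q y)) / n) < (\<Sum>k<n. \<Sum>y\<in>W xs b k. q y)"
      using n by (intro sum_strict_mono) auto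
    then show False using tot n by simp
  qed
  then obtain k where k: "(\<Sum>y\<in>W xs b k. q y) \<le> (b * (\<Sum>y\<in>I. q y)) / n" by blast
  show ?thesis
    apply (rule exI[of _ "W xs b k"])
    using k W_sub[of xs b k] card_W[OF xs(2), of b k] n xs(1) len n_def by auto
qed


lemma CS_sub: "model V E C \<Longrightarrow> S \<subseteq> V \<Longrightarrow> CS C S \<subseteq> E"
  unfolding model_def CS_def by auto

lemma packing_le_cover:
  assumes m: "model V E C" and sc: "set_cover V E C S'" and sp: "set_packing V E C T"
  shows "card T \<le> card S'"
proof -
  have fE: "finite E" and fV: "finite V" using m by (auto simp: model_def)
  have TE: "T \<subseteq> E" using sp by (simp add: set_packing_def)
  have S'V: "S' \<subseteq> V" and cov: "CS C S' = E" using sc by (auto simp: set_cover_def)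
  have "\<forall>e\<in>T. \<exists>i\<in>S'. e \<in> C i" using TE cov by (auto simp: CS_def)
  then obtain f where f: "\<forall>e\<in>T. f e \<in> S' \<and> e \<in> C (f e)" by metis
  have "inj_on f T"
  proof (rule inj_onI)
    fix x y assume x: "x \<in> T" and y: "y \<in> T" and e: "f x = f y"
    have "f x \<in> V" using f x S'V by auto
    then have "card (C (f x) \<inter> T) \<le> 1" using sp by (simp add: set_packing_def)
    moreover have "finite (C (f x) \<inter> T)" using TE fE by (meson finite_Int finite_subset)
    moreover have "x \<in> C (f x) \<inter> T" "y \<in> C (f x) \<inter> T" using f x y e by auto
    ultimately show "x = y" using card_le_Suc0_iff_eq by (metis One_nat_def)
  qed
  moreover have "f ` T \<subseteq> S'" using f by auto
  moreover have "finite S'" using S'V fV finite_subset by auto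
  ultimately show ?thesis by (meson card_inj_on_le)
qed

lemma nstar_le:
  assumes m: "model V E C" and sc: "set_cover V E C S'"
  shows "n_star V E C \<le> card S'"
proof -
  have "finite V" using m by (simp add: model_def)
  then have "finite {S. set_cover V E C S}" by (rule finite_subset[rotated, OF finite_Pow_iff[THEN iffD2]]) (auto simp: set_cover_def)
  then show ?thesis unfolding n_star_def using sc by (intro Min_le) auto
qed

lemma mstar_le:
  assumes m: "model V E C" and sc: "set_cover V E C S'"
  shows "m_star V E C \<le> card S'"
proof -
  have "finite E" using m by (simp add: model_def)
  then have "finite {T. set_packing V E C T}" by (rule finite_subset[rotated, OF finite_Pow_iff[THEN iffD2]]) (auto simp: set_packing_def)
  moreover have "{} \<in> {T. set_packing V E C T}" by (simp add: set_packing_def)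
  ultimately show ?thesis unfolding m_star_def
    using packing_le_cover[OF m sc] by (subst Max_le_iff) auto
qed

lemma private_comp:
  assumes m: "model V E C" and ms: "minimal_set_cover V E C S'" and i: "i \<in> S'"
  shows "\<exists>e\<in>C i. \<forall>j\<in>S'. j \<noteq> i \<longrightarrow> e \<notin> C j"
proof -
  have sc: "S' \<subseteq> V" "CS C S' = E" using ms by (auto simp: minimal_set_cover_def set_cover_def)
  have "S' - {i} \<subset> S'" using i by auto
  then have "\<not> set_cover V E C (S' - {i})" using ms by (simp add: minimal_set_cover_def)
  then have "CS C (S' - {i}) \<noteq> E" using sc by (auto simp: set_cover_def)
  moreover have "CS C (S' - {i}) \<subseteq> E" using CS_sub[OF m, of "S' - {i}"] sc by auto
  ultimately obtain e where "e \<in> E" "e \<notin> CS C (S' - {i})" by auto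
  then show ?thesis using sc(2) unfolding CS_def by auto
qed

lemma fin_A1: "finite V \<Longrightarrow> finite (A1 V b)"
  unfolding A1_def by (rule finite_subset[of _ "Pow V"]) auto

lemma fin_A2: "finite E \<Longrightarrow> finite (A2 E b)"
  unfolding A2_def by (rule finite_subset[of _ "Pow E"]) auto

lemma part1_gen:
  assumes m: "model V E C" and ms: "minimal_set_cover V E C S'"
    and b1: "b1 < card S'" and b2: "b2 < card S'"
    and mix: "mixed (A1 V b1) \<sigma>1" and bas: "basis \<sigma>1 \<subseteq> S'"
  shows "Min ((\<lambda>T. - U2 C \<sigma>1 (return_pmf T)) ` A2 E b2) \<le> real b2 * (real b1 / real (card S') - 1)"
proof -
  have fV: "finite V" and fE: "finite E" using m by (auto simp: model_def)
  have S'V: "S' \<subseteq> V" using ms by (auto simp: minimal_set_cover_def set_cover_def)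
  have fS': "finite S'" using S'V fV finite_subset by auto
  have fin: "finite (set_pmf \<sigma>1)" using mix fin_A1[OF fV] by (auto simp: mixed_def intro: finite_subset)
  have supp: "S \<subseteq> S'" "card S \<le> b1" if "S \<in> set_pmf \<sigma>1" for S
    using that mix bas basis_supp[OF that] by (auto simp: mixed_def A1_def)
  obtain pe where pe: "\<forall>i\<in>S'. pe i \<in> C i \<and> (\<forall>j\<in>S'. j \<noteq> i \<longrightarrow> pe i \<notin> C j)"
    using private_comp[OF m ms] by metis
  define q where "q i = measure_pmf.expectation \<sigma>1 (\<lambda>S. if i \<in> S then 1 else (0::real))" for i
  have "(\<Sum>i\<in>S'. q i) = measure_pmf.expectation \<sigma>1 (\<lambda>S. real (card (S' \<inter> S)))"
    unfolding q_def using exp_card_inter[OF fin fS', of "\<lambda>S. S"] by simp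
  also have "\<dots> \<le> b1"
    using supp by (intro exp_le_const[OF fin]) (simp add: Int_absorb1)
  finally have sumq: "(\<Sum>i\<in>S'. q i) \<le> b1" .
  obtain J where J: "J \<subseteq> S'" "card J = b2" "(\<Sum>i\<in>J. q i) \<le> real b2 / card S' * (\<Sum>i\<in>S'. q i)"
    using avg[OF fS', of b2 q] b2 by auto
  have injpe: "inj_on pe S'" using pe by (metis inj_onI)
  define T where "T = pe ` J"
  have injJ: "inj_on pe J" using injpe J(1) inj_on_subset by auto
  have cT: "card T = b2" unfolding T_def using card_image[OF injJ] J by simp
  have CE: "\<forall>i\<in>V. C i \<subseteq> E" using m by (simp add: model_def)
  have TE: "T \<subseteq> E"
  proof
    fix e assume "e \<in> T"
    then obtain i where i: "i \<in> J" "e = pe i" unfolding T_def by auto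
    then have "i \<in> S'" "i \<in> V" using J(1) S'V by auto
    have "pe i \<in> C i" using pe \<open>i \<in> S'\<close> by blast
    then show "e \<in> E" using CE \<open>i \<in> V\<close> i(2) by blast
  qed
  have TA: "T \<in> A2 E b2" using cT TE by (simp add: A2_def)
  have fT: "finite T" using TE fE finite_subset by auto
  have "measure_pmf.expectation \<sigma>1 (\<lambda>S. real (FF C S T))
      = measure_pmf.expectation \<sigma>1 (\<lambda>S. real (card (T \<inter> CS C S)))"
    unfolding FF_def by (simp add: Int_commute)
  also have "\<dots> = (\<Sum>e\<in>T. measure_pmf.expectation \<sigma>1 (\<lambda>S. if e \<in> CS C S then 1 else 0))"
    by (rule exp_card_inter[OF fin fT])
  also have "\<dots> = (\<Sum>i\<in>J. measure_pmf.expectation \<sigma>1 (\<lambda>S. if pe i \<in> CS C S then 1 else 0))"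
    unfolding T_def by (rule sum.reindex[OF injJ, unfolded comp_def])
  also have "\<dots> = (\<Sum>i\<in>J. q i)"
  proof (rule sum.cong[OF refl])
    fix i assume iJ: "i \<in> J"
    show "measure_pmf.expectation \<sigma>1 (\<lambda>S. if pe i \<in> CS C S then 1 else 0) = q i"
      unfolding q_def
    proof (rule exp_cong[OF fin])
      fix S assume S: "S \<in> set_pmf \<sigma>1"
      have iS': "i \<in> S'" using iJ J(1) by auto
      have p1: "pe i \<in> C i" and p2: "\<And>j. j \<in> S' \<Longrightarrow> j \<noteq> i \<Longrightarrow> pe i \<notin> C j"
        using pe iS' by auto
      have "pe i \<in> CS C S \<longleftrightarrow> i \<in> S"
      proof
        assume "pe i \<in> CS C S"
        then obtain j where "j \<in> S" "pe i \<in> C j" unfolding CS_def by auto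
        then show "i \<in> S" using p2 supp(1)[OF S] by (cases "j = i") auto
      next
        assume "i \<in> S" then show "pe i \<in> CS C S" using p1 unfolding CS_def by auto
      qed
      then show "(if pe i \<in> CS C S then 1 else 0) = (if i \<in> S then 1 else (0::real))" by simp
    qed
  qed
  also have "\<dots> \<le> real b2 / card S' * b1"
  proof -
    have "0 \<le> real b2 / card S'" by simp
    then have "real b2 / card S' * (\<Sum>i\<in>S'. q i) \<le> real b2 / card S' * b1"
      using sumq mult_left_mono by blast
    then show ?thesis using J(3) by linarith
  qed
  finally have ex: "measure_pmf.expectation \<sigma>1 (\<lambda>S. real (FF C S T)) \<le> real b2 / card S' * b1" .
  have "Min ((\<lambda>T. - U2 C \<sigma>1 (return_pmf T)) ` A2 E b2) \<le> - U2 C \<sigma>1 (return_pmf T)"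
    using TA fin_A2[OF fE] by (intro Min_le) auto
  also have "\<dots> \<le> real b2 / card S' * b1 - b2" unfolding negU2_ret using ex cT by simp
  also have "\<dots> = real b2 * (real b1 / real (card S') - 1)" by (simp add: algebra_simps)
  finally show ?thesis .
qed


lemma card_sum:
  assumes "finite T"
  shows "real (card (T \<inter> A)) = (\<Sum>e\<in>T. if e \<in> A then 1 else 0)"
  using assms by (simp add: sum.If_cases Int_def)

lemma set_cyclic:
  assumes "length xs > 0"
  shows "set_pmf (cyclic xs b) = W xs b ` {0..<length xs}"
  unfolding cyclic_W using assms by (simp add: set_pmf_of_set)

lemma basis_cyclic:
  assumes "length xs > 0"
  shows "basis (cyclic xs b) \<subseteq> set xs"
proof
  fix x assume x: "x \<in> basis (cyclic xs b)"
  show "x \<in> set xs"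
  proof (rule ccontr)
    assume nx: "x \<notin> set xs"
    have "{S. x \<in> S} \<inter> set_pmf (cyclic xs b) = {}"
      using nx W_sub[OF assms] unfolding set_cyclic[OF assms] by auto
    then have "measure_pmf.prob (cyclic xs b) {S. x \<in> S} = 0"
      using measure_Int_set_pmf[of "cyclic xs b" "{S. x \<in> S}"] by simp
    then show False using x unfolding basis_def by simp
  qed
qed

lemma mixed_cyclic:
  assumes "distinct xs" "b \<le> length xs" "length xs > 0" "set xs \<subseteq> X"
  shows "set_pmf (cyclic xs b) \<subseteq> {S. S \<subseteq> X \<and> card S \<le> b}"
  unfolding set_cyclic[OF assms(3)] using W_sub[OF assms(3)] card_W[OF assms(1,2)] assms(4) by fastforce

lemma part1_cyc:
  assumes m: "model V E C" and sc: "set_cover V E C S'"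
    and xs: "distinct xs" "set xs = S'" and b1: "b1 \<le> card S'"
    and T: "T \<in> A2 E b2"
  shows "real b2 * (real b1 / real (card S') - 1) \<le> - U2 C (cyclic xs b1) (return_pmf T)"
proof -
  have fE: "finite E" using m by (simp add: model_def)
  have len: "length xs = card S'" using xs distinct_card by metis
  have n0: "card S' > 0"
  proof -
    obtain e where "e \<in> E" using m by (auto simp: model_def)
    then have "S' \<noteq> {}" using sc by (auto simp: set_cover_def CS_def)
    moreover have "finite S'" using xs(2) by auto
    ultimately show ?thesis by auto
  qed
  let ?n = "card S'"
  have TE: "T \<subseteq> E" and cT: "card T \<le> b2" using T by (auto simp: A2_def)
  have fT: "finite T" using TE fE finite_subset by auto
  have "\<forall>e\<in>T. \<exists>i\<in>S'. e \<in> C i" using TE sc by (auto simp: set_cover_def CS_def)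
  then obtain ie where ie: "\<forall>e\<in>T. ie e \<in> S' \<and> e \<in> C (ie e)" by metis
  have step: "real (FF C (W xs b1 k) T) \<ge> (\<Sum>e\<in>T. if ie e \<in> W xs b1 k then 1 else 0)" for k
  proof -
    have "real (FF C (W xs b1 k) T) = (\<Sum>e\<in>T. if e \<in> CS C (W xs b1 k) then 1 else 0)"
      unfolding FF_def by (simp add: Int_commute card_sum[OF fT])
    moreover have "(\<Sum>e\<in>T. if ie e \<in> W xs b1 k then 1 else 0) \<le> (\<Sum>e\<in>T. if e \<in> CS C (W xs b1 k) then 1 else (0::real))"
    proof (rule sum_mono)
      fix e assume "e \<in> T"
      then have "e \<in> C (ie e)" using ie by blast
      then show "(if ie e \<in> W xs b1 k then 1 else 0) \<le> (if e \<in> CS C (W xs b1 k) then 1 else (0::real))"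
        unfolding CS_def by auto
    qed
    ultimately show ?thesis by simp
  qed
  have "(\<Sum>k<?n. real (FF C (W xs b1 k) T)) \<ge> (\<Sum>k<?n. \<Sum>e\<in>T. if ie e \<in> W xs b1 k then 1 else 0)"
    by (intro sum_mono step)
  also have "(\<Sum>k<?n. \<Sum>e\<in>T. if ie e \<in> W xs b1 k then 1 else (0::real)) = (\<Sum>e\<in>T. \<Sum>k<?n. if ie e \<in> W xs b1 k then 1 else 0)"
    by (rule sum.swap)
  also have "\<dots> = (\<Sum>e\<in>T. real b1)"
  proof (rule sum.cong[OF refl])
    fix e assume "e \<in> T"
    then have "ie e \<in> set xs" using ie xs(2) by blast
    then show "(\<Sum>k<?n. if ie e \<in> W xs b1 k then 1 else 0) = real b1"
      using count_W[OF xs(1), of b1 "ie e"] len b1 n0 by simp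
  qed
  finally have sumge: "real (card T) * b1 \<le> (\<Sum>k<?n. real (FF C (W xs b1 k) T))" by simp
  have "measure_pmf.expectation (cyclic xs b1) (\<lambda>S. real (FF C S T)) = (\<Sum>k<?n. real (FF C (W xs b1 k) T)) / ?n"
    using exp_cyclic[of xs] len n0 by simp
  then have ex: "real (card T) * b1 / ?n \<le> measure_pmf.expectation (cyclic xs b1) (\<lambda>S. real (FF C S T))"
    using sumge n0 by (simp add: divide_right_mono)
  have neg: "real b1 / ?n - 1 \<le> 0" using b1 n0 by (simp add: divide_le_eq)
  have "real b2 * (real b1 / ?n - 1) \<le> real (card T) * (real b1 / ?n - 1)"
    using cT neg by (simp add: mult_right_mono_neg)
  also have "\<dots> = real (card T) * b1 / ?n - card T" by (simp add: algebra_simps)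
  also have "\<dots> \<le> - U2 C (cyclic xs b1) (return_pmf T)" unfolding negU2_ret using ex by simp
  finally show ?thesis .
qed

lemma card_packing_CS:
  assumes m: "model V E C" and sp: "set_packing V E C T'" and S: "S \<in> A1 V b1"
  shows "card (T' \<inter> CS C S) \<le> b1"
proof -
  have fV: "finite V" and fE: "finite E" using m by (auto simp: model_def)
  have SV: "S \<subseteq> V" and cS: "card S \<le> b1" using S by (auto simp: A1_def)
  have fS: "finite S" using SV fV finite_subset by auto
  have eq: "T' \<inter> CS C S = (\<Union>i\<in>S. T' \<inter> C i)" unfolding CS_def by auto
  have "card (\<Union>i\<in>S. T' \<inter> C i) \<le> (\<Sum>i\<in>S. card (T' \<inter> C i))" using fS by (rule card_UN_le)
  also have "\<dots> \<le> (\<Sum>i\<in>S. 1)"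
  proof (rule sum_mono)
    fix i assume "i \<in> S" then have "i \<in> V" using SV by auto
    then show "card (T' \<inter> C i) \<le> 1" using sp by (simp add: set_packing_def Int_commute)
  qed
  also have "\<dots> \<le> b1" using cS by simp
  finally show ?thesis using eq by simp
qed

lemma part2_cyc:
  assumes m: "model V E C" and sp: "set_packing V E C T'"
    and es: "distinct es" "set es = T'" and b2: "b2 \<le> card T'" "b2 > 0"
    and S: "S \<in> A1 V b1"
  shows "max 0 (real b2 * (1 - real b1 / real (card T'))) \<le> U2 C (return_pmf S) (cyclic es b2)"
proof -
  have len: "length es = card T'" using es distinct_card by metis
  let ?m = "card T'"
  have m0: "?m > 0" using b2 by auto
  have fT': "finite T'" using es(2) by auto
  define D where "D = T' - CS C S"
  have fD: "finite D" using fT' D_def by auto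
  have Wsub: "W es b2 k \<subseteq> T'" for k using W_sub[of es b2 k] len m0 es(2) by auto
  have fW: "finite (W es b2 k)" for k unfolding W_def by simp
  have diff: "real (card (W es b2 k)) - real (FF C S (W es b2 k)) = (\<Sum>e\<in>D. if e \<in> W es b2 k then 1 else 0)" for k
  proof -
    have un: "W es b2 k = (CS C S \<inter> W es b2 k) \<union> (D \<inter> W es b2 k)" using Wsub[of k] D_def by auto
    have "card (W es b2 k) = card (CS C S \<inter> W es b2 k) + card (D \<inter> W es b2 k)"
      by (subst un, rule card_Un_disjoint) (use fW D_def in auto)
    then have "real (card (W es b2 k)) - real (FF C S (W es b2 k)) = real (card (D \<inter> W es b2 k))"
      unfolding FF_def by simp
    also have "\<dots> = (\<Sum>e\<in>D. if e \<in> W es b2 k then 1 else 0)" by (rule card_sum[OF fD])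
    finally show ?thesis .
  qed
  have "U2 C (return_pmf S) (cyclic es b2)
     = (\<Sum>k<?m. real (card (W es b2 k))) / ?m - (\<Sum>k<?m. real (FF C S (W es b2 k))) / ?m"
    unfolding U2_ret using exp_cyclic[of es] len m0 by simp
  also have "\<dots> = (\<Sum>k<?m. real (card (W es b2 k)) - real (FF C S (W es b2 k))) / ?m"
    by (simp add: sum_subtractf diff_divide_distrib)
  also have "\<dots> = (\<Sum>k<?m. \<Sum>e\<in>D. if e \<in> W es b2 k then 1 else 0) / ?m"
    using diff by simp
  also have "(\<Sum>k<?m. \<Sum>e\<in>D. if e \<in> W es b2 k then 1 else (0::real)) = (\<Sum>e\<in>D. \<Sum>k<?m. if e \<in> W es b2 k then 1 else 0)"
    by (rule sum.swap)
  also have "\<dots> = (\<Sum>e\<in>D. real b2)"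
  proof (rule sum.cong[OF refl])
    fix e assume "e \<in> D"
    then have "e \<in> set es" using D_def es(2) by auto
    then show "(\<Sum>k<?m. if e \<in> W es b2 k then 1 else 0) = real b2"
      using count_W[OF es(1), of b2 e] len b2 m0 by simp
  qed
  finally have U: "U2 C (return_pmf S) (cyclic es b2) = real b2 * card D / ?m" by simp
  have cI: "card (T' \<inter> CS C S) \<le> b1" by (rule card_packing_CS[OF m sp S])
  have "card D = ?m - card (T' \<inter> CS C S)" unfolding D_def
    using card_Diff_subset_Int fT' by (metis Diff_Int2 Int_absorb Int_lower1 card_Diff_subset finite_Int)
  moreover have "card (T' \<inter> CS C S) \<le> ?m" using fT' by (simp add: card_mono)
  ultimately have cD: "real ?m - b1 \<le> real (card D)" using cI by simp
  have "real b2 * (1 - real b1 / ?m) = real b2 * (real ?m - b1) / ?m" using m0 by (simp add: field_simps)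
  also have "\<dots> \<le> real b2 * card D / ?m" using cD by (simp add: divide_right_mono mult_left_mono)
  finally have g1: "real b2 * (1 - real b1 / ?m) \<le> U2 C (return_pmf S) (cyclic es b2)" using U by simp
  have g0: "0 \<le> U2 C (return_pmf S) (cyclic es b2)" using U by simp
  show ?thesis using g0 g1 by simp
qed


lemma part2_gen:
  assumes m: "model V E C" and sp: "set_packing V E C T'" and b2: "b2 \<le> card T'" "b2 > 0"
    and mix: "mixed (A2 E b2) \<sigma>2" and bas: "basis \<sigma>2 \<subseteq> T'"
  shows "Min ((\<lambda>S. U2 C (return_pmf S) \<sigma>2) ` A1 V b1) \<le> max 0 (real b2 * (1 - real b1 / real (card T')))"
proof -
  have fV: "finite V" and fE: "finite E" using m by (auto simp: model_def)
  have T'E: "T' \<subseteq> E" using sp by (simp add: set_packing_def)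
  have fT': "finite T'" using T'E fE finite_subset by auto
  let ?m = "card T'"
  have m0: "?m > 0" using b2 by auto
  have fin: "finite (set_pmf \<sigma>2)" using mix fin_A2[OF fE] by (auto simp: mixed_def intro: finite_subset)
  have supp: "T \<subseteq> T'" "card T \<le> b2" if "T \<in> set_pmf \<sigma>2" for T
    using that mix bas basis_supp[OF that] by (auto simp: mixed_def A2_def)
  have finA1: "finite ((\<lambda>S. U2 C (return_pmf S) \<sigma>2) ` A1 V b1)" using fin_A1[OF fV] by simp
  define p where "p e = measure_pmf.expectation \<sigma>2 (\<lambda>T. if e \<in> T then 1 else (0::real))" for e
  have ET: "measure_pmf.expectation \<sigma>2 (\<lambda>T. real (card T)) = (\<Sum>e\<in>T'. p e)"
  proof -
    have "measure_pmf.expectation \<sigma>2 (\<lambda>T. real (card T)) = measure_pmf.expectation \<sigma>2 (\<lambda>T. real (card (T' \<inter> T)))"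
      using supp by (intro exp_cong[OF fin]) (simp add: Int_absorb1)
    also have "\<dots> = (\<Sum>e\<in>T'. p e)" unfolding p_def using exp_card_inter[OF fin fT', of "\<lambda>T. T"] by simp
    finally show ?thesis .
  qed
  have ETle: "measure_pmf.expectation \<sigma>2 (\<lambda>T. real (card T)) \<le> b2"
    using supp by (intro exp_le_const[OF fin]) simp
  have "\<forall>e\<in>T'. \<exists>i\<in>V. e \<in> C i" using m T'E by (auto simp: model_def)
  then obtain ne where ne: "\<forall>e\<in>T'. ne e \<in> V \<and> e \<in> C (ne e)" by metis
  have injne: "inj_on ne T'"
  proof (rule inj_onI)
    fix x y assume x: "x \<in> T'" and y: "y \<in> T'" and e: "ne x = ne y"
    have "ne x \<in> V" using ne x by auto
    then have "card (C (ne x) \<inter> T') \<le> 1" using sp by (simp add: set_packing_def)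
    moreover have "finite (C (ne x) \<inter> T')" using fT' by simp
    moreover have "x \<in> C (ne x) \<inter> T'" "y \<in> C (ne x) \<inter> T'" using ne x y e by auto
    ultimately show "x = y" using card_le_Suc0_iff_eq by (metis One_nat_def)
  qed
  show ?thesis
  proof (cases "?m \<le> b1")
    case True
    define S where "S = ne ` T'"
    have SA: "S \<in> A1 V b1" unfolding S_def A1_def using ne True card_image_le[OF fT', of ne] by auto
    have cov: "T' \<subseteq> CS C S" unfolding S_def CS_def using ne by blast
    have "U2 C (return_pmf S) \<sigma>2 = measure_pmf.expectation \<sigma>2 (\<lambda>T. real (card T)) - measure_pmf.expectation \<sigma>2 (\<lambda>T. real (card T))"
      unfolding U2_ret
      by (rule arg_cong[where f="\<lambda>x. _ - x"], rule exp_cong[OF fin])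
         (use supp cov in \<open>auto simp: FF_def intro!: arg_cong[where f=card] arg_cong[where f=real]\<close>)
    then have "U2 C (return_pmf S) \<sigma>2 = 0" by simp
    then have "Min ((\<lambda>S. U2 C (return_pmf S) \<sigma>2) ` A1 V b1) \<le> 0"
      using SA finA1 by (metis Min_le image_eqI)
    then show ?thesis by simp
  next
    case False
    obtain J where J: "J \<subseteq> T'" "card J = b1" "(\<Sum>e\<in>J. - p e) \<le> real b1 / ?m * (\<Sum>e\<in>T'. - p e)"
      using avg[OF fT' m0, of b1 "\<lambda>e. - p e"] False by auto
    have Jge: "real b1 / ?m * (\<Sum>e\<in>T'. p e) \<le> (\<Sum>e\<in>J. p e)"
      using J(3) by (simp add: sum_negf)
    define S where "S = ne ` J"
    have fJ: "finite J" using J(1) fT' finite_subset by auto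
    have SA: "S \<in> A1 V b1" unfolding S_def A1_def using ne J card_image_le[OF fJ, of ne] by auto
    have cov: "J \<subseteq> CS C S" unfolding S_def CS_def using ne J(1) by blast
    have "(\<Sum>e\<in>J. p e) = measure_pmf.expectation \<sigma>2 (\<lambda>T. real (card (J \<inter> T)))"
      unfolding p_def using exp_card_inter[OF fin fJ, of "\<lambda>T. T"] by simp
    also have "\<dots> \<le> measure_pmf.expectation \<sigma>2 (\<lambda>T. real (FF C S T))"
    proof (rule exp_mono[OF fin])
      fix T assume T: "T \<in> set_pmf \<sigma>2"
      have "finite T" using supp(1)[OF T] fT' finite_subset by auto
      then have "card (J \<inter> T) \<le> card (CS C S \<inter> T)" using cov by (intro card_mono) auto
      then show "real (card (J \<inter> T)) \<le> real (FF C S T)" unfolding FF_def by simp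
    qed
    finally have EF: "(\<Sum>e\<in>J. p e) \<le> measure_pmf.expectation \<sigma>2 (\<lambda>T. real (FF C S T))" .
    have c0: "0 \<le> 1 - real b1 / ?m" using False m0 by (simp add: field_simps)
    have "U2 C (return_pmf S) \<sigma>2 \<le> (\<Sum>e\<in>T'. p e) - real b1 / ?m * (\<Sum>e\<in>T'. p e)"
      unfolding U2_ret ET using EF Jge by linarith
    also have "\<dots> = (1 - real b1 / ?m) * (\<Sum>e\<in>T'. p e)" by (simp add: algebra_simps)
    also have "\<dots> \<le> (1 - real b1 / ?m) * b2" using c0 ETle ET by (simp add: mult_left_mono)
    finally have "U2 C (return_pmf S) \<sigma>2 \<le> real b2 * (1 - real b1 / ?m)" by (simp add: mult.commute)
    moreover have "Min ((\<lambda>S. U2 C (return_pmf S) \<sigma>2) ` A1 V b1) \<le> U2 C (return_pmf S) \<sigma>2"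
      using SA finA1 by (metis Min_le image_eqI)
    ultimately show ?thesis by simp
  qed
qed


theorem proposition1:
  fixes V :: "'v set" and E :: "'e set" and C :: "'v \<Rightarrow> 'e set" and b1 b2 :: nat
  assumes "model V E C" and "b1 > 0" and "b2 > 0"
    and "b1 < n_star V E C" and "b2 < m_star V E C"
  shows
   "(\<forall>S'. minimal_set_cover V E C S' \<longrightarrow>
      (\<forall>\<sigma>1. mixed (A1 V b1) \<sigma>1 \<and> basis \<sigma>1 \<subseteq> S' \<longrightarrow>
          Min ((\<lambda>T. - U2 C \<sigma>1 (return_pmf T)) ` A2 E b2)
            \<le> real b2 * (real b1 / real (card S') - 1))
    \<and> (\<forall>xs. distinct xs \<and> set xs = S' \<longrightarrow>
          mixed (A1 V b1) (cyclic xs b1) \<and> basis (cyclic xs b1) \<subseteq> S' \<and>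
          Min ((\<lambda>T. - U2 C (cyclic xs b1) (return_pmf T)) ` A2 E b2)
            = real b2 * (real b1 / real (card S') - 1)))
  \<and> (\<forall>T'. set_packing V E C T' \<and> card T' \<ge> b2 \<longrightarrow>
      (\<forall>\<sigma>2. mixed (A2 E b2) \<sigma>2 \<and> basis \<sigma>2 \<subseteq> T' \<longrightarrow>
          Min ((\<lambda>S. U2 C (return_pmf S) \<sigma>2) ` A1 V b1)
            \<le> max 0 (real b2 * (1 - real b1 / real (card T'))))
    \<and> (\<forall>es. distinct es \<and> set es = T' \<longrightarrow>
          mixed (A2 E b2) (cyclic es b2) \<and> basis (cyclic es b2) \<subseteq> T' \<and>
          Min ((\<lambda>S. U2 C (return_pmf S) (cyclic es b2)) ` A1 V b1)
            = max 0 (real b2 * (1 - real b1 / real (card T')))))"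
proof -
  note m = assms(1)
  have fV: "finite V" and fE: "finite E" using m by (auto simp: model_def)
  have ne2: "A2 E b2 \<noteq> {}" by (auto simp: A2_def)
  have ne1: "A1 V b1 \<noteq> {}" by (auto simp: A1_def)
  have P1: "(\<forall>\<sigma>1. mixed (A1 V b1) \<sigma>1 \<and> basis \<sigma>1 \<subseteq> S' \<longrightarrow>
          Min ((\<lambda>T. - U2 C \<sigma>1 (return_pmf T)) ` A2 E b2)
            \<le> real b2 * (real b1 / real (card S') - 1))
    \<and> (\<forall>xs. distinct xs \<and> set xs = S' \<longrightarrow>
          mixed (A1 V b1) (cyclic xs b1) \<and> basis (cyclic xs b1) \<subseteq> S' \<and>
          Min ((\<lambda>T. - U2 C (cyclic xs b1) (return_pmf T)) ` A2 E b2)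
            = real b2 * (real b1 / real (card S') - 1))"
    if ms: "minimal_set_cover V E C S'" for S'
  proof -
    have sc: "set_cover V E C S'" using ms by (simp add: minimal_set_cover_def)
    have S'V: "S' \<subseteq> V" using sc by (simp add: set_cover_def)
    have b1S: "b1 < card S'" using nstar_le[OF m sc] assms(4) by simp
    have b2S: "b2 < card S'" using mstar_le[OF m sc] assms(5) by simp
    have G: "Min ((\<lambda>T. - U2 C \<sigma>1 (return_pmf T)) ` A2 E b2) \<le> real b2 * (real b1 / real (card S') - 1)"
      if "mixed (A1 V b1) \<sigma>1" "basis \<sigma>1 \<subseteq> S'" for \<sigma>1
      by (rule part1_gen[OF m ms b1S b2S that])
    show ?thesis
    proof (intro conjI allI impI)
      fix \<sigma>1 assume "mixed (A1 V b1) \<sigma>1 \<and> basis \<sigma>1 \<subseteq> S'"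
      then show "Min ((\<lambda>T. - U2 C \<sigma>1 (return_pmf T)) ` A2 E b2) \<le> real b2 * (real b1 / real (card S') - 1)"
        using G by blast
    next
      fix xs assume xs: "distinct xs \<and> set xs = S'"
      have len: "length xs = card S'" using xs distinct_card by metis
      then have l0: "length xs > 0" using b1S by simp
      show mx: "mixed (A1 V b1) (cyclic xs b1)"
        unfolding mixed_def A1_def using mixed_cyclic[of xs b1 V] xs len b1S l0 S'V by simp
      show bs: "basis (cyclic xs b1) \<subseteq> S'" using basis_cyclic[OF l0] xs by simp
      show "Min ((\<lambda>T. - U2 C (cyclic xs b1) (return_pmf T)) ` A2 E b2) = real b2 * (real b1 / real (card S') - 1)"
      proof (rule antisym)
        show "Min ((\<lambda>T. - U2 C (cyclic xs b1) (return_pmf T)) ` A2 E b2) \<le> real b2 * (real b1 / real (card S') - 1)"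
          by (rule G[OF mx bs])
        show "real b2 * (real b1 / real (card S') - 1) \<le> Min ((\<lambda>T. - U2 C (cyclic xs b1) (return_pmf T)) ` A2 E b2)"
        proof (rule Min.boundedI)
          show "finite ((\<lambda>T. - U2 C (cyclic xs b1) (return_pmf T)) ` A2 E b2)" using fin_A2[OF fE] by simp
          show "(\<lambda>T. - U2 C (cyclic xs b1) (return_pmf T)) ` A2 E b2 \<noteq> {}" using ne2 by simp
          fix a assume "a \<in> (\<lambda>T. - U2 C (cyclic xs b1) (return_pmf T)) ` A2 E b2"
          then obtain T where T: "T \<in> A2 E b2" "a = - U2 C (cyclic xs b1) (return_pmf T)" by blast
          have "distinct xs" "set xs = S'" using xs by auto
          from part1_cyc[OF m sc this _ T(1)] b1S T(2)
          show "real b2 * (real b1 / real (card S') - 1) \<le> a" by simp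
        qed
      qed
    qed
  qed
  have P2: "(\<forall>\<sigma>2. mixed (A2 E b2) \<sigma>2 \<and> basis \<sigma>2 \<subseteq> T' \<longrightarrow>
          Min ((\<lambda>S. U2 C (return_pmf S) \<sigma>2) ` A1 V b1)
            \<le> max 0 (real b2 * (1 - real b1 / real (card T'))))
    \<and> (\<forall>es. distinct es \<and> set es = T' \<longrightarrow>
          mixed (A2 E b2) (cyclic es b2) \<and> basis (cyclic es b2) \<subseteq> T' \<and>
          Min ((\<lambda>S. U2 C (return_pmf S) (cyclic es b2)) ` A1 V b1)
            = max 0 (real b2 * (1 - real b1 / real (card T'))))"
    if sp: "set_packing V E C T'" and cT: "card T' \<ge> b2" for T'
  proof -
    have T'E: "T' \<subseteq> E" using sp by (simp add: set_packing_def)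
    have G: "Min ((\<lambda>S. U2 C (return_pmf S) \<sigma>2) ` A1 V b1) \<le> max 0 (real b2 * (1 - real b1 / real (card T')))"
      if "mixed (A2 E b2) \<sigma>2" "basis \<sigma>2 \<subseteq> T'" for \<sigma>2
      by (rule part2_gen[OF m sp cT assms(3) that])
    show ?thesis
    proof (intro conjI allI impI)
      fix \<sigma>2 assume "mixed (A2 E b2) \<sigma>2 \<and> basis \<sigma>2 \<subseteq> T'"
      then show "Min ((\<lambda>S. U2 C (return_pmf S) \<sigma>2) ` A1 V b1) \<le> max 0 (real b2 * (1 - real b1 / real (card T')))"
        using G by blast
    next
      fix es assume es: "distinct es \<and> set es = T'"
      have len: "length es = card T'" using es distinct_card by metis
      then have l0: "length es > 0" using cT assms(3) by simp
      show mx: "mixed (A2 E b2) (cyclic es b2)"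
        unfolding mixed_def A2_def using mixed_cyclic[of es b2 E] es len cT l0 T'E by simp
      show bs: "basis (cyclic es b2) \<subseteq> T'" using basis_cyclic[OF l0] es by simp
      show "Min ((\<lambda>S. U2 C (return_pmf S) (cyclic es b2)) ` A1 V b1) = max 0 (real b2 * (1 - real b1 / real (card T')))"
      proof (rule antisym)
        show "Min ((\<lambda>S. U2 C (return_pmf S) (cyclic es b2)) ` A1 V b1) \<le> max 0 (real b2 * (1 - real b1 / real (card T')))"
          by (rule G[OF mx bs])
        show "max 0 (real b2 * (1 - real b1 / real (card T'))) \<le> Min ((\<lambda>S. U2 C (return_pmf S) (cyclic es b2)) ` A1 V b1)"
        proof (rule Min.boundedI)
          show "finite ((\<lambda>S. U2 C (return_pmf S) (cyclic es b2)) ` A1 V b1)" using fin_A1[OF fV] by simp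
          show "(\<lambda>S. U2 C (return_pmf S) (cyclic es b2)) ` A1 V b1 \<noteq> {}" using ne1 by simp
          fix a assume "a \<in> (\<lambda>S. U2 C (return_pmf S) (cyclic es b2)) ` A1 V b1"
          then obtain S where S: "S \<in> A1 V b1" "a = U2 C (return_pmf S) (cyclic es b2)" by blast
          have "distinct es" "set es = T'" using es by auto
          from part2_cyc[OF m sp this cT assms(3) S(1)] S(2)
          show "max 0 (real b2 * (1 - real b1 / real (card T'))) \<le> a" by simp
        qed
      qed
    qed
  qed
  show ?thesis
    apply (intro conjI allI impI)
    using P1 P2 by auto
qed

end
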